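(* $SL_3(\mathfrak{o})$ is the union of the sets $$\Gamma_\infty(3)\,u\,d\,\varphi_1(y)\quad (y\in Y(\mathfrak{o}),\ d\in D(3),\ u\in U(3)),$$ $$\Gamma_\infty(3)\,u\,d\,\varphi_2(y_2)\varphi_1(y_1)\quad (y_1,y_2\in Y(\mathfrak{o}),\ y_2\neq I_2,\ d\in D(3),\ u\in U(3)),$$ $$\Gamma_\infty(3)\,u\,d\,\varphi_1(y_3)\varphi_2(y_2)\varphi_1(y_1)\quad (y_1,y_2,y_3\in Y(\mathfrak{o}),\ y_2,y_3\neq I_2,\ d\in D(3),\ u\in U(3)),$$ and this union is disjoint: the three families together form a decomposition of $SL_3(\mathfrak{o})$ into pairwise disjoint sets.
   Context: Let $\omega=e^{2\pi i/3}$, $\mathfrak{o}=\mathbb{Z}[\omega]$, $\mathfrak{o}^\times$ its unit group. Fix representatives of nonzero elements modulo units ("$c\in(\mathfrak{o}-\{0\})/\mathfrak{o}^\times$") and, for each nonzero $c$, representatives of $\mathfrak{o}/c\mathfrak{o}$ ("$a\in\mathfrak{o}/c\mathfrak{o}$"). $Y(\mathfrak{o})=\{\begin{pmatrix}a&b\\c&d\end{pmatrix}\in SL_2(\mathfrak{o}) : c\in(\mathfrak{o}-\{0\})/\mathfrak{o}^\times,\ a\in\mathfrak{o}/c\mathfrak{o}\}\cup\{I_2\}$. $\Gamma(3)=\{A\in SL_3(\mathfrak{o}):A\equiv I_3\pmod{3\mathfrak{o}}\}$ (entrywise), $\Gamma_\infty(3)$ its subgroup of upper triangular unipotent matrices.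 $D(3)$: diagonal $\mathrm{diag}(i,j,k)$ with $i,j,k\in\mathfrak{o}$, $ijk=1$. $U(3)$: matrices $\begin{pmatrix}1&\alpha&\beta\\&1&\gamma\\&&1\end{pmatrix}$ with $\alpha,\beta,\gamma\in\{0,1,2\}+\{0,1,2\}\omega$. For $y=\begin{pmatrix}a&b\\c&d\end{pmatrix}\in SL_2(\mathfrak{o})$, $\varphi_1(y)=\begin{pmatrix}a&b&0\\c&d&0\\0&0&1\end{pmatrix}$, $\varphi_2(y)=\begin{pmatrix}1&0&0\\0&a&b\\0&c&d\end{pmatrix}$. *)

theory Defs
  imports "HOL-Analysis.Analysis"
begin

definition omega :: complex where
  "omega = cis (2 * pi / 3)"

definition Eis :: "complex set" where
  "Eis = {of_int a + of_int b * omega | a b :: int. True}"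

definition Eis_units :: "complex set" where
  "Eis_units = {u \<in> Eis. \<exists>v \<in> Eis. u * v = 1}"

definition nonzero_rep_system :: "complex set \<Rightarrow> bool" where
  "nonzero_rep_system C \<longleftrightarrow> C \<subseteq> Eis - {0} \<and>
     (\<forall>x \<in> Eis - {0}. \<exists>!c. c \<in> C \<and> (\<exists>u \<in> Eis_units. x = u * c))"

definition residue_rep_system :: "complex \<Rightarrow> complex set \<Rightarrow> bool" where
  "residue_rep_system c A \<longleftrightarrow> A \<subseteq> Eis \<and>
     (\<forall>x \<in> Eis. \<exists>!a. a \<in> A \<and> (\<exists>t \<in> Eis. x - a = c * t))"

definition SL2 :: "(complex^2^2) set" where
  "SL2 = {M. (\<forall>i j. M $ i $ j \<in> Eis) \<and> det M = 1}"

definition SL3 :: "(complex^3^3) set" where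
  "SL3 = {M. (\<forall>i j. M $ i $ j \<in> Eis) \<and> det M = 1}"

definition mat2 :: "complex \<Rightarrow> complex \<Rightarrow> complex \<Rightarrow> complex \<Rightarrow> complex^2^2" where
  "mat2 a b c d = (\<chi> i j. if i = 1 then (if j = 1 then a else b)
                           else (if j = 1 then c else d))"

definition mat3 :: "complex \<Rightarrow> complex \<Rightarrow> complex \<Rightarrow> complex \<Rightarrow> complex \<Rightarrow> complex
     \<Rightarrow> complex \<Rightarrow> complex \<Rightarrow> complex \<Rightarrow> complex^3^3" where
  "mat3 a11 a12 a13 a21 a22 a23 a31 a32 a33 =
     (\<chi> i j. if i = 1 then (if j = 1 then a11 else if j = 2 then a12 else a13)
             else if i = 2 then (if j = 1 then a21 else if j = 2 then a22 else a23)
             else (if j = 1 then a31 else if j = 2 then a32 else a33))"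

definition Yset :: "complex set \<Rightarrow> (complex \<Rightarrow> complex set) \<Rightarrow> (complex^2^2) set" where
  "Yset C R = {y \<in> SL2. y $ 2 $ 1 \<in> C \<and> y $ 1 $ 1 \<in> R (y $ 2 $ 1)} \<union> {mat 1}"

definition Gamma3 :: "(complex^3^3) set" where
  "Gamma3 = {A \<in> SL3. \<forall>i j. \<exists>t \<in> Eis. A $ i $ j - (mat 1 :: complex^3^3) $ i $ j = 3 * t}"

definition Gamma_inf3 :: "(complex^3^3) set" where
  "Gamma_inf3 = {A \<in> Gamma3. A $ 1 $ 1 = 1 \<and> A $ 2 $ 2 = 1 \<and> A $ 3 $ 3 = 1 \<and>
                   A $ 2 $ 1 = 0 \<and> A $ 3 $ 1 = 0 \<and> A $ 3 $ 2 = 0}"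

definition D3 :: "(complex^3^3) set" where
  "D3 = {mat3 i 0 0 0 j 0 0 0 k | i j k. i \<in> Eis \<and> j \<in> Eis \<and> k \<in> Eis \<and> i * j * k = 1}"

definition small_res :: "complex set" where
  "small_res = {of_int a + of_int b * omega | a b :: int. a \<in> {0,1,2} \<and> b \<in> {0,1,2}}"

definition U3 :: "(complex^3^3) set" where
  "U3 = {mat3 1 \<alpha> \<beta> 0 1 \<gamma> 0 0 1 | \<alpha> \<beta> \<gamma>. \<alpha> \<in> small_res \<and> \<beta> \<in> small_res \<and> \<gamma> \<in> small_res}"

definition phi1 :: "complex^2^2 \<Rightarrow> complex^3^3" where
  "phi1 y = mat3 (y$1$1) (y$1$2) 0 (y$2$1) (y$2$2) 0 0 0 1"

definition phi2 :: "complex^2^2 \<Rightarrow> complex^3^3" where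
  "phi2 y = mat3 1 0 0 0 (y$1$1) (y$1$2) 0 (y$2$1) (y$2$2)"

datatype cell_index =
    Cell1 "complex^2^2" "complex^3^3" "complex^3^3"
  | Cell2 "complex^2^2" "complex^2^2" "complex^3^3" "complex^3^3"
  | Cell3 "complex^2^2" "complex^2^2" "complex^2^2" "complex^3^3" "complex^3^3"

fun valid_index :: "complex set \<Rightarrow> (complex \<Rightarrow> complex set) \<Rightarrow> cell_index \<Rightarrow> bool" where
  "valid_index C R (Cell1 y d u) \<longleftrightarrow> y \<in> Yset C R \<and> d \<in> D3 \<and> u \<in> U3"
| "valid_index C R (Cell2 y1 y2 d u) \<longleftrightarrow> y1 \<in> Yset C R \<and> y2 \<in> Yset C R \<and> y2 \<noteq> mat 1
      \<and> d \<in> D3 \<and> u \<in> U3"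
| "valid_index C R (Cell3 y1 y2 y3 d u) \<longleftrightarrow> y1 \<in> Yset C R \<and> y2 \<in> Yset C R \<and> y3 \<in> Yset C R
      \<and> y2 \<noteq> mat 1 \<and> y3 \<noteq> mat 1 \<and> d \<in> D3 \<and> u \<in> U3"

fun cell :: "cell_index \<Rightarrow> (complex^3^3) set" where
  "cell (Cell1 y d u) = (\<lambda>g. g ** u ** d ** phi1 y) ` Gamma_inf3"
| "cell (Cell2 y1 y2 d u) = (\<lambda>g. g ** u ** d ** phi2 y2 ** phi1 y1) ` Gamma_inf3"
| "cell (Cell3 y1 y2 y3 d u) = (\<lambda>g. g ** u ** d ** phi1 y3 ** phi2 y2 ** phi1 y1) ` Gamma_inf3"

end

theory Submission
  imports Defs
begin

lemma omega_re: "Re omega = -1/2" and omega_im: "Im omega = sqrt 3 / 2"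
  by (simp_all add: omega_def cos_120 sin_120)

lemma omega_sq: "omega^2 = -1 - omega"
  by (simp add: complex_eq_iff power2_eq_square omega_re omega_im)

lemma Eis_iff: "z \<in> Eis \<longleftrightarrow> (\<exists>a b::int. z = of_int a + of_int b * omega)"
  by (auto simp: Eis_def)

lemma Eis_0[simp]: "0 \<in> Eis"
  unfolding Eis_iff by (rule exI[of _ 0], rule exI[of _ 0], simp)
lemma Eis_1[simp]: "1 \<in> Eis"
  unfolding Eis_iff by (rule exI[of _ 1], rule exI[of _ 0], simp)
lemma Eis_omega[simp]: "omega \<in> Eis"
  unfolding Eis_iff by (rule exI[of _ 0], rule exI[of _ 1], simp)

lemma Eis_add[simp]: "x \<in> Eis \<Longrightarrow> y \<in> Eis \<Longrightarrow> x + y \<in> Eis"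
proof -
  assume "x \<in> Eis" "y \<in> Eis"
  then obtain a b c d where xy: "x = of_int a + of_int b * omega" "y = of_int c + of_int d * omega"
    unfolding Eis_iff by blast
  have "x + y = of_int (a+c) + of_int (b+d) * omega" unfolding xy by (simp add: algebra_simps)
  then show ?thesis unfolding Eis_iff by blast
qed

lemma Eis_uminus[simp]: "x \<in> Eis \<Longrightarrow> - x \<in> Eis"
  unfolding Eis_iff
  by (clarify, rename_tac a b, rule_tac x="-a" in exI, rule_tac x="-b" in exI, simp add: algebra_simps)

lemma Eis_diff[simp]: "x \<in> Eis \<Longrightarrow> y \<in> Eis \<Longrightarrow> x - y \<in> Eis"
  using Eis_add[of x "-y"] by simp

lemma Eis_mult[simp]: "x \<in> Eis \<Longrightarrow> y \<in> Eis \<Longrightarrow> x * y \<in> Eis"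
proof -
  assume "x \<in> Eis" "y \<in> Eis"
  then obtain a b c d where xy: "x = of_int a + of_int b * omega" "y = of_int c + of_int d * omega"
    unfolding Eis_iff by blast
  have h: "omega * omega = -1 - omega" using omega_sq by (simp add: power2_eq_square)
  have "x * y = of_int (a*c) + of_int (a*d + b*c) * omega + of_int (b*d) * (omega * omega)"
    unfolding xy by (simp add: algebra_simps)
  also have "... = of_int (a*c - b*d) + of_int (a*d + b*c - b*d) * omega"
    unfolding h by (simp add: algebra_simps)
  finally have "x * y = of_int (a*c - b*d) + of_int (a*d + b*c - b*d) * omega" .
  then show ?thesis unfolding Eis_iff by blast
qed

lemma Eis_of_int[simp]: "of_int n \<in> Eis"
  unfolding Eis_iff by (rule exI[of _ n], rule exI[of _ 0], simp)

lemma Eis_numeral[simp]: "numeral n \<in> Eis"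
  using Eis_of_int[of "numeral n"] by simp

lemma Eis_sum: "finite S \<Longrightarrow> (\<And>i. i \<in> S \<Longrightarrow> f i \<in> Eis) \<Longrightarrow> sum f S \<in> Eis"
  by (induction S rule: finite_induct) auto

lemma Eis_cnj[simp]: "x \<in> Eis \<Longrightarrow> cnj x \<in> Eis"
proof -
  assume "x \<in> Eis"
  then obtain a b where x: "x = of_int a + of_int b * omega" unfolding Eis_iff by blast
  have "cnj omega = -1 - omega" by (simp add: complex_eq_iff omega_re omega_im)
  then have "cnj x = of_int a + of_int b * (-1 - omega)" unfolding x by simp
  also have "... = of_int (a - b) + of_int (-b) * omega" by (simp add: algebra_simps)
  finally have "cnj x = of_int (a - b) + of_int (-b) * omega" .
  then show ?thesis unfolding Eis_iff by blast
qed

lemma norm_Eis: "(cmod (of_int a + of_int b * omega))^2 = of_int (a^2 - a*b + b^2)"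
proof -
  have "(cmod (of_int a + of_int b * omega))^2 = (a - b/2)^2 + (b * sqrt 3 / 2)^2"
    by (simp add: cmod_def omega_re omega_im)
  also have "... = a^2 - a*b + b^2" by (simp add: power2_eq_square algebra_simps)
  finally show ?thesis by simp
qed

lemma norm_Eis_int: "x \<in> Eis \<Longrightarrow> \<exists>n::int. (cmod x)^2 = of_int n"
  unfolding Eis_iff using norm_Eis by blast

lemma Eis_division:
  assumes "z \<in> Eis" "w \<in> Eis" "w \<noteq> 0"
  shows "\<exists>q \<in> Eis. cmod (z - w * q) < cmod w"
proof -
  obtain p q where pq: "z / w = of_real p + of_real q * omega"
  proof -
    have "Im omega \<noteq> 0" by (simp add: omega_im)
    let ?q = "Im (z/w) / Im omega"
    let ?p = "Re (z/w) - ?q * Re omega"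
    have "z / w = of_real ?p + of_real ?q * omega"
      using \<open>Im omega \<noteq> 0\<close> by (simp add: complex_eq_iff)
    then show ?thesis using that by blast
  qed
  define m where "m = round p"
  define n where "n = round q"
  define s where "s = p - m"
  define t where "t = q - n"
  have s: "\<bar>s\<bar> \<le> 1/2" unfolding s_def m_def using of_int_round_abs_le[of p] by (simp add: abs_minus_commute)
  have t: "\<bar>t\<bar> \<le> 1/2" unfolding t_def n_def using of_int_round_abs_le[of q] by (simp add: abs_minus_commute)
  define Q where "Q = (of_int m + of_int n * omega :: complex)"
  have QE: "Q \<in> Eis" unfolding Q_def Eis_iff by blast
  have "z / w - Q = of_real s + of_real t * omega"
    unfolding pq Q_def s_def t_def by (simp add: algebra_simps)
  then have "(cmod (z/w - Q))^2 = (s - t/2)^2 + (t * sqrt 3 / 2)^2"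
    by (simp add: cmod_def omega_re omega_im)
  also have "... = s^2 - s*t + t^2" by (simp add: power2_eq_square algebra_simps)
  also have "... < 1"
  proof -
    have a1: "\<bar>s\<bar>*\<bar>s\<bar> \<le> 1/2*(1/2)" using s by (intro mult_mono) auto
    have a2: "\<bar>t\<bar>*\<bar>t\<bar> \<le> 1/2*(1/2)" using t by (intro mult_mono) auto
    have a3: "\<bar>s\<bar>*\<bar>t\<bar> \<le> 1/2*(1/2)" using s t by (intro mult_mono) auto
    have "s^2 - s*t + t^2 \<le> \<bar>s\<bar>*\<bar>s\<bar> + \<bar>s\<bar>*\<bar>t\<bar> + \<bar>t\<bar>*\<bar>t\<bar>"
      by (simp add: power2_eq_square abs_mult[symmetric])
    then show ?thesis using a1 a2 a3 by linarith
  qed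
  finally have "cmod (z/w - Q) < 1" by (smt (verit) norm_ge_zero power_less_one_iff one_less_power)
  moreover have "z - w * Q = w * (z/w - Q)" using assms(3) by (simp add: field_simps)
  ultimately have "cmod (z - w*Q) < cmod w" using assms(3) by (simp add: norm_mult)
  then show ?thesis using QE by blast
qed

lemma Eis_bezout_aux:
  "\<forall>a b. a \<in> Eis \<longrightarrow> b \<in> Eis \<longrightarrow> (cmod b)^2 < real n \<longrightarrow>
     (\<exists>g s t x w. g \<in> Eis \<and> s \<in> Eis \<and> t \<in> Eis \<and> x \<in> Eis \<and> w \<in> Eis \<and>
        g = s*a + t*b \<and> a = g*x \<and> b = g*w)"
proof (induction n)
  case 0
  then show ?case by simp
next
  case (Suc n)
  show ?case
  proof (intro allI impI)
    fix a b assume a: "a \<in> Eis" and b: "b \<in> Eis" and lt: "(cmod b)^2 < real (Suc n)"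
    show "\<exists>g s t x w. g \<in> Eis \<and> s \<in> Eis \<and> t \<in> Eis \<and> x \<in> Eis \<and> w \<in> Eis \<and>
        g = s*a + t*b \<and> a = g*x \<and> b = g*w"
    proof (cases "b = 0")
      case True
      then show ?thesis using a by (intro exI[of _ a] exI[of _ 1] exI[of _ 0]) auto
    next
      case False
      obtain q where q: "q \<in> Eis" "cmod (a - b*q) < cmod b" using Eis_division[OF a b False] by blast
      define r where "r = a - b*q"
      have r: "r \<in> Eis" unfolding r_def using a b q by simp
      obtain k1 where k1: "(cmod r)^2 = of_int k1" using norm_Eis_int[OF r] by blast
      obtain k2 where k2: "(cmod b)^2 = of_int k2" using norm_Eis_int[OF b] by blast
      have "(cmod r)^2 < (cmod b)^2" using q(2) unfolding r_def
        by (simp add: power_strict_mono)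
      then have "k1 < k2" using k1 k2 by simp
      then have "(cmod r)^2 < real n" using k1 k2 lt by simp
      then obtain g s t x w where *: "g \<in> Eis" "s \<in> Eis" "t \<in> Eis" "x \<in> Eis" "w \<in> Eis"
        "g = s*b + t*r" "b = g*x" "r = g*w"
        using Suc.IH b r by blast
      have e1: "g = t*a + (s - t*q)*b" unfolding *(6) r_def by (simp add: algebra_simps)
      have "a = b*q + r" unfolding r_def by simp
      also have "... = g*x*q + g*w" using *(7,8) by simp
      finally have e2: "a = g*(x*q + w)" by (simp add: algebra_simps)
      have e3: "s - t*q \<in> Eis" "x*q + w \<in> Eis" using *(1-5) q(1) by auto
      show ?thesis using e1 e2 e3 *(1-5) *(7) by blast
    qed
  qed
qed

lemma Eis_bezout:
  assumes "a \<in> Eis" "b \<in> Eis"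
  shows "\<exists>g s t x w. g \<in> Eis \<and> s \<in> Eis \<and> t \<in> Eis \<and> x \<in> Eis \<and> w \<in> Eis \<and>
        g = s*a + t*b \<and> a = g*x \<and> b = g*w"
proof -
  obtain n :: nat where "(cmod b)^2 < real n" using reals_Archimedean2 by blast
  then show ?thesis using Eis_bezout_aux assms by blast
qed

lemma three_neq[simp]: "(1::3) \<noteq> 2" "(1::3) \<noteq> 3" "(2::3) \<noteq> 3" "(2::3) \<noteq> 1" "(3::3) \<noteq> 1" "(3::3) \<noteq> 2"
  by simp_all

lemma two_neq[simp]: "(1::2) \<noteq> 2" "(2::2) \<noteq> 1"
  by simp_all

lemma mat3_nth[simp]:
  "mat3 a11 a12 a13 a21 a22 a23 a31 a32 a33 $ 1 $ 1 = a11"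
  "mat3 a11 a12 a13 a21 a22 a23 a31 a32 a33 $ 1 $ 2 = a12"
  "mat3 a11 a12 a13 a21 a22 a23 a31 a32 a33 $ 1 $ 3 = a13"
  "mat3 a11 a12 a13 a21 a22 a23 a31 a32 a33 $ 2 $ 1 = a21"
  "mat3 a11 a12 a13 a21 a22 a23 a31 a32 a33 $ 2 $ 2 = a22"
  "mat3 a11 a12 a13 a21 a22 a23 a31 a32 a33 $ 2 $ 3 = a23"
  "mat3 a11 a12 a13 a21 a22 a23 a31 a32 a33 $ 3 $ 1 = a31"
  "mat3 a11 a12 a13 a21 a22 a23 a31 a32 a33 $ 3 $ 2 = a32"
  "mat3 a11 a12 a13 a21 a22 a23 a31 a32 a33 $ 3 $ 3 = a33"
  by (simp_all add: mat3_def)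

lemma mat2_nth[simp]:
  "mat2 a b c d $ 1 $ 1 = a" "mat2 a b c d $ 1 $ 2 = b"
  "mat2 a b c d $ 2 $ 1 = c" "mat2 a b c d $ 2 $ 2 = d"
  by (simp_all add: mat2_def)

lemma mat3_eta: "M = mat3 (M$1$1) (M$1$2) (M$1$3) (M$2$1) (M$2$2) (M$2$3) (M$3$1) (M$3$2) (M$3$3)"
  unfolding vec_eq_iff forall_3 by simp

lemma mat2_eta: "M = mat2 (M$1$1) (M$1$2) (M$2$1) (M$2$2)"
  unfolding vec_eq_iff forall_2 by simp

lemma mat3_eq_iff:
  "mat3 a11 a12 a13 a21 a22 a23 a31 a32 a33 = mat3 b11 b12 b13 b21 b22 b23 b31 b32 b33 \<longleftrightarrow>
   a11 = b11 \<and> a12 = b12 \<and> a13 = b13 \<and> a21 = b21 \<and> a22 = b22 \<and> a23 = b23 \<and> a31 = b31 \<and> a32 = b32 \<and> a33 = b33"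
  (is "?l = ?r")
proof
  assume ?l then show ?r by (metis mat3_nth)
qed simp

lemma mat2_eq_iff:
  "mat2 a b c d = mat2 a' b' c' d' \<longleftrightarrow> a = a' \<and> b = b' \<and> c = c' \<and> d = d'"
  by (metis mat2_nth)

lemma mat3_mult:
  "mat3 a11 a12 a13 a21 a22 a23 a31 a32 a33 ** mat3 b11 b12 b13 b21 b22 b23 b31 b32 b33 =
   mat3 (a11*b11 + a12*b21 + a13*b31) (a11*b12 + a12*b22 + a13*b32) (a11*b13 + a12*b23 + a13*b33)
        (a21*b11 + a22*b21 + a23*b31) (a21*b12 + a22*b22 + a23*b32) (a21*b13 + a22*b23 + a23*b33)
        (a31*b11 + a32*b21 + a33*b31) (a31*b12 + a32*b22 + a33*b32) (a31*b13 + a32*b23 + a33*b33)"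
  unfolding vec_eq_iff forall_3 by (simp add: matrix_matrix_mult_def sum_3)

lemma mat2_mult:
  "mat2 a b c d ** mat2 a' b' c' d' = mat2 (a*a' + b*c') (a*b' + b*d') (c*a' + d*c') (c*b' + d*d')"
  unfolding vec_eq_iff forall_2 by (simp add: matrix_matrix_mult_def sum_2)

lemma det_mat3: "det (mat3 a11 a12 a13 a21 a22 a23 a31 a32 a33) =
   a11*a22*a33 + a12*a23*a31 + a13*a21*a32 - a11*a23*a32 - a12*a21*a33 - a13*a22*a31"
  by (simp add: det_3)

lemma det_mat2: "det (mat2 a b c d) = a*d - b*c"
  by (simp add: det_2)

lemma mat1_3: "(mat 1 :: complex^3^3) = mat3 1 0 0 0 1 0 0 0 1"
  unfolding vec_eq_iff forall_3 by (simp add: mat_def)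

lemma mat1_2: "(mat 1 :: complex^2^2) = mat2 1 0 0 1"
  unfolding vec_eq_iff forall_2 by (simp add: mat_def)

lemma phi1_mat2: "phi1 (mat2 a b c d) = mat3 a b 0 c d 0 0 0 1"
  by (simp add: phi1_def)

lemma phi2_mat2: "phi2 (mat2 a b c d) = mat3 1 0 0 0 a b 0 c d"
  by (simp add: phi2_def)

lemma SL3_mat3: "mat3 a11 a12 a13 a21 a22 a23 a31 a32 a33 \<in> SL3 \<longleftrightarrow>
  a11 \<in> Eis \<and> a12 \<in> Eis \<and> a13 \<in> Eis \<and> a21 \<in> Eis \<and> a22 \<in> Eis \<and> a23 \<in> Eis \<and> a31 \<in> Eis \<and> a32 \<in> Eis \<and> a33 \<in> Eis \<and>
  a11*a22*a33 + a12*a23*a31 + a13*a21*a32 - a11*a23*a32 - a12*a21*a33 - a13*a22*a31 = 1"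
  unfolding SL3_def by (simp add: forall_3 det_mat3)

lemma SL2_mat2: "mat2 a b c d \<in> SL2 \<longleftrightarrow> a \<in> Eis \<and> b \<in> Eis \<and> c \<in> Eis \<and> d \<in> Eis \<and> a*d - b*c = 1"
  unfolding SL2_def by (simp add: forall_2 det_mat2)

lemma SL3_mult: "A \<in> SL3 \<Longrightarrow> B \<in> SL3 \<Longrightarrow> A ** B \<in> SL3"
  unfolding SL3_def
proof (intro CollectI conjI allI; elim CollectE conjE)
  fix i j assume "\<forall>i j. A $ i $ j \<in> Eis" "\<forall>i j. B $ i $ j \<in> Eis"
  then show "(A ** B) $ i $ j \<in> Eis" by (auto simp: matrix_matrix_mult_def intro!: Eis_sum)
next
  assume "det A = 1" "det B = 1" then show "det (A ** B) = 1" by (simp add: det_mul)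
qed

lemma phi1_SL3: "y \<in> SL2 \<Longrightarrow> phi1 y \<in> SL3"
  by (subst (asm) mat2_eta, subst mat2_eta) (simp add: SL2_mat2 phi1_mat2 SL3_mat3 del: mat2_nth)

lemma phi2_SL3: "y \<in> SL2 \<Longrightarrow> phi2 y \<in> SL3"
  by (subst (asm) mat2_eta, subst mat2_eta) (simp add: SL2_mat2 phi2_mat2 SL3_mat3 del: mat2_nth)

definition Bset :: "(complex^3^3) set" where
  "Bset = {mat3 e1 x y 0 e2 z 0 0 e3 | e1 e2 e3 x y z. e1 \<in> Eis \<and> e2 \<in> Eis \<and> e3 \<in> Eis \<and>
      x \<in> Eis \<and> y \<in> Eis \<and> z \<in> Eis \<and> e1*e2*e3 = 1}"

lemma Eis_indep: "of_int a + of_int b * omega = (0::complex) \<Longrightarrow> a = 0 \<and> b = 0"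
proof -
  assume h: "of_int a + of_int b * omega = (0::complex)"
  then have "Im (of_int a + of_int b * omega) = 0" by simp
  then have "b = 0" by (simp add: omega_im)
  with h show ?thesis by simp
qed

lemma Gamma_char: "g \<in> Gamma_inf3 \<longleftrightarrow> (\<exists>p q r. p \<in> Eis \<and> q \<in> Eis \<and> r \<in> Eis \<and> g = mat3 1 (3*p) (3*q) 0 1 (3*r) 0 0 1)"
proof
  assume g: "g \<in> Gamma_inf3"
  then have G: "\<forall>i j. \<exists>t \<in> Eis. g $ i $ j - (mat 1 :: complex^3^3) $ i $ j = 3 * t"
    and d: "g $ 1 $ 1 = 1" "g $ 2 $ 2 = 1" "g $ 3 $ 3 = 1" "g $ 2 $ 1 = 0" "g $ 3 $ 1 = 0" "g $ 3 $ 2 = 0"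
    unfolding Gamma_inf3_def Gamma3_def by auto
  obtain p where p: "p \<in> Eis" "g $ 1 $ 2 = 3 * p" using G[rule_format, of 1 2] by (auto simp: mat_def)
  obtain q where q: "q \<in> Eis" "g $ 1 $ 3 = 3 * q" using G[rule_format, of 1 3] by (auto simp: mat_def)
  obtain r where r: "r \<in> Eis" "g $ 2 $ 3 = 3 * r" using G[rule_format, of 2 3] by (auto simp: mat_def)
  have "g = mat3 1 (3*p) (3*q) 0 1 (3*r) 0 0 1"
    by (subst mat3_eta) (simp only: d p(2) q(2) r(2))
  then show "\<exists>p q r. p \<in> Eis \<and> q \<in> Eis \<and> r \<in> Eis \<and> g = mat3 1 (3*p) (3*q) 0 1 (3*r) 0 0 1"
    using p q r by blast
next
  assume "\<exists>p q r. p \<in> Eis \<and> q \<in> Eis \<and> r \<in> Eis \<and> g = mat3 1 (3*p) (3*q) 0 1 (3*r) 0 0 1"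
  then obtain p q r where pqr: "p \<in> Eis" "q \<in> Eis" "r \<in> Eis" and g: "g = mat3 1 (3*p) (3*q) 0 1 (3*r) 0 0 1"
    by blast
  have "g \<in> SL3" unfolding g SL3_mat3 using pqr by simp
  moreover have "\<forall>i j. \<exists>t \<in> Eis. g $ i $ j - (mat 1 :: complex^3^3) $ i $ j = 3 * t"
    unfolding forall_3 g mat1_3 using pqr by (auto intro: bexI[of _ 0])
  ultimately show "g \<in> Gamma_inf3" unfolding Gamma_inf3_def Gamma3_def g by simp
qed

lemma small_res_Eis: "r \<in> small_res \<Longrightarrow> r \<in> Eis"
  unfolding small_res_def Eis_def by blast

lemma mod3_int: "\<exists>a0 p. (a::int) = a0 + 3*p \<and> a0 \<in> {0,1,2}"
  by (rule exI[of _ "a mod 3"], rule exI[of _ "a div 3"]) auto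

lemma Eis_mod3: "w \<in> Eis \<Longrightarrow> \<exists>r t. r \<in> small_res \<and> t \<in> Eis \<and> w = r + 3*t"
proof -
  assume "w \<in> Eis"
  then obtain a b where w: "w = of_int a + of_int b * omega" unfolding Eis_iff by blast
  obtain a0 p where a: "a = a0 + 3*p" "a0 \<in> {0,1,2}" using mod3_int by blast
  obtain b0 q where b: "b = b0 + 3*q" "b0 \<in> {0,1,2}" using mod3_int by blast
  have "w = (of_int a0 + of_int b0 * omega) + 3 * (of_int p + of_int q * omega)"
    unfolding w a b by (simp add: algebra_simps)
  moreover have "of_int a0 + of_int b0 * omega \<in> small_res" unfolding small_res_def using a b by blast
  moreover have "of_int p + of_int q * omega \<in> Eis" unfolding Eis_iff by blast
  ultimately show ?thesis by blast
qed

lemma small_res_cong: "r \<in> small_res \<Longrightarrow> r' \<in> small_res \<Longrightarrow> t \<in> Eis \<Longrightarrow> r - r' = 3*t \<Longrightarrow> r = r'"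
proof -
  assume r: "r \<in> small_res" and r': "r' \<in> small_res" and t: "t \<in> Eis" and e: "r - r' = 3*t"
  obtain a b where ab: "r = of_int a + of_int b * omega" "a \<in> {0,1,2}" "b \<in> {0,1,2}"
    using r unfolding small_res_def by blast
  obtain a' b' where ab': "r' = of_int a' + of_int b' * omega" "a' \<in> {0,1,2}" "b' \<in> {0,1,2}"
    using r' unfolding small_res_def by blast
  obtain p q where t': "t = of_int p + of_int q * omega" using t unfolding Eis_iff by blast
  have "of_int (a - a' - 3*p) + of_int (b - b' - 3*q) * omega = (0::complex)"
    using e unfolding ab ab' t' by (simp add: algebra_simps)
  from Eis_indep[OF this] have "a - a' = 3*p" "b - b' = 3*q" by auto
  then have "a = a'" "b = b'" using ab(2,3) ab'(2,3) by (auto; presburger)+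
  then show "r = r'" using ab ab' by simp
qed

lemma Bset_I: "e1 \<in> Eis \<Longrightarrow> e2 \<in> Eis \<Longrightarrow> e3 \<in> Eis \<Longrightarrow> x \<in> Eis \<Longrightarrow> y \<in> Eis \<Longrightarrow> z \<in> Eis \<Longrightarrow>
  e1*e2*e3 = 1 \<Longrightarrow> mat3 e1 x y 0 e2 z 0 0 e3 \<in> Bset"
  unfolding Bset_def by blast

lemma Bset_mult: "A \<in> Bset \<Longrightarrow> B \<in> Bset \<Longrightarrow> A ** B \<in> Bset"
proof -
  assume "A \<in> Bset" "B \<in> Bset"
  then obtain e1 e2 e3 x y z f1 f2 f3 x' y' z' where
    A: "A = mat3 e1 x y 0 e2 z 0 0 e3" "e1 \<in> Eis" "e2 \<in> Eis" "e3 \<in> Eis" "x \<in> Eis" "y \<in> Eis" "z \<in> Eis" "e1*e2*e3 = 1" and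
    B: "B = mat3 f1 x' y' 0 f2 z' 0 0 f3" "f1 \<in> Eis" "f2 \<in> Eis" "f3 \<in> Eis" "x' \<in> Eis" "y' \<in> Eis" "z' \<in> Eis" "f1*f2*f3 = 1"
    unfolding Bset_def by blast
  have "A ** B = mat3 (e1*f1) (e1*x' + x*f2) (e1*y' + x*z' + y*f3) 0 (e2*f2) (e2*z' + z*f3) 0 0 (e3*f3)"
    unfolding A(1) B(1) mat3_mult by simp
  moreover have "(e1*f1)*(e2*f2)*(e3*f3) = 1" using A(8) B(8) by algebra
  ultimately show ?thesis using A(2-7) B(2-7) by (metis Bset_I Eis_add Eis_mult)
qed

lemma Bset_adj: "mat3 e1 x y 0 e2 z 0 0 e3 \<in> Bset \<Longrightarrow>
   mat3 (e2*e3) (-x*e3) (x*z - y*e2) 0 (e1*e3) (-z*e1) 0 0 (e1*e2) \<in> Bset \<and>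
   mat3 (e2*e3) (-x*e3) (x*z - y*e2) 0 (e1*e3) (-z*e1) 0 0 (e1*e2) ** mat3 e1 x y 0 e2 z 0 0 e3 = mat 1"
proof -
  assume "mat3 e1 x y 0 e2 z 0 0 e3 \<in> Bset"
  then have h: "e1 \<in> Eis" "e2 \<in> Eis" "e3 \<in> Eis" "x \<in> Eis" "y \<in> Eis" "z \<in> Eis" "e1*e2*e3 = 1"
    by (auto simp: Bset_def mat3_eq_iff)
  have "mat3 (e2*e3) (-x*e3) (x*z - y*e2) 0 (e1*e3) (-z*e1) 0 0 (e1*e2) \<in> Bset"
    apply (rule Bset_I)
    using h apply (simp_all)
    using h(7) by algebra
  moreover have "mat3 (e2*e3) (-x*e3) (x*z - y*e2) 0 (e1*e3) (-z*e1) 0 0 (e1*e2) ** mat3 e1 x y 0 e2 z 0 0 e3 = mat 1"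
  proof -
    have a: "e2*e3*e1 = 1" "e1*e3*e2 = 1" using h(7) by (simp_all add: ac_simps)
    have b: "e2 * e3 * y + - x * e3 * z + (x * z - y * e2) * e3 = 0" by (simp add: algebra_simps)
    show ?thesis unfolding mat3_mult mat1_3 mat3_eq_iff using a b h(7) by (simp add: algebra_simps)
  qed
  ultimately show ?thesis by blast
qed

lemma Bset_inv: "b \<in> Bset \<Longrightarrow> \<exists>b'. b' \<in> Bset \<and> b' ** b = mat 1"
proof -
  assume b: "b \<in> Bset"
  then obtain e1 e2 e3 x y z where "b = mat3 e1 x y 0 e2 z 0 0 e3" unfolding Bset_def by blast
  then show ?thesis using Bset_adj b by blast
qed

lemma GUD_form: "mat3 1 (3*p) (3*q) 0 1 (3*r) 0 0 1 ** mat3 1 al be 0 1 ga 0 0 1 ** mat3 i 0 0 0 j 0 0 0 k = mat3 i (j*(al + 3*p)) (k*(be + 3*p*ga + 3*q)) 0 j (k*(ga + 3*r)) 0 0 (k::complex)"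
    unfolding mat3_mult mat3_eq_iff by simp

lemma Gamma_obt: "g \<in> Gamma_inf3 \<Longrightarrow> (\<And>p q r. p \<in> Eis \<Longrightarrow> q \<in> Eis \<Longrightarrow> r \<in> Eis \<Longrightarrow> g = mat3 1 (3*p) (3*q) 0 1 (3*r) 0 0 1 \<Longrightarrow> P) \<Longrightarrow> P"
  using Gamma_char by blast

lemma U3_obt: "u \<in> U3 \<Longrightarrow> (\<And>al be ga. al \<in> small_res \<Longrightarrow> be \<in> small_res \<Longrightarrow> ga \<in> small_res \<Longrightarrow> u = mat3 1 al be 0 1 ga 0 0 1 \<Longrightarrow> P) \<Longrightarrow> P"
  unfolding U3_def by blast

lemma D3_obt: "d \<in> D3 \<Longrightarrow> (\<And>i j k. i \<in> Eis \<Longrightarrow> j \<in> Eis \<Longrightarrow> k \<in> Eis \<Longrightarrow> i*j*k = 1 \<Longrightarrow> d = mat3 i 0 0 0 j 0 0 0 k \<Longrightarrow> P) \<Longrightarrow> P"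
  unfolding D3_def by blast

lemma GUD_in_B: "g \<in> Gamma_inf3 \<Longrightarrow> u \<in> U3 \<Longrightarrow> d \<in> D3 \<Longrightarrow> g ** u ** d \<in> Bset"
proof -
  assume G: "g \<in> Gamma_inf3" and U: "u \<in> U3" and D: "d \<in> D3"
  obtain p q r where g: "p \<in> Eis" "q \<in> Eis" "r \<in> Eis" "g = mat3 1 (3*p) (3*q) 0 1 (3*r) 0 0 1"
    using Gamma_obt[OF G] by blast
  obtain al be ga where u: "al \<in> small_res" "be \<in> small_res" "ga \<in> small_res" "u = mat3 1 al be 0 1 ga 0 0 1"
    using U3_obt[OF U] by blast
  obtain i j k where d: "i \<in> Eis" "j \<in> Eis" "k \<in> Eis" "i*j*k = 1" "d = mat3 i 0 0 0 j 0 0 0 k"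
    using D3_obt[OF D] by blast
  have "g ** u ** d = mat3 i (j*(al + 3*p)) (k*(be + 3*p*ga + 3*q)) 0 j (k*(ga + 3*r)) 0 0 k"
    unfolding g(4) u(4) d(5) by (rule GUD_form)
  moreover have E: "al \<in> Eis" "be \<in> Eis" "ga \<in> Eis" using u small_res_Eis by auto
  moreover have "mat3 i (j*(al + 3*p)) (k*(be + 3*p*ga + 3*q)) 0 j (k*(ga + 3*r)) 0 0 k \<in> Bset"
    by (rule Bset_I) (use g E d in auto)
  ultimately show ?thesis by simp
qed

lemma B_GUD: "b \<in> Bset \<Longrightarrow> \<exists>g u d. g \<in> Gamma_inf3 \<and> u \<in> U3 \<and> d \<in> D3 \<and> b = g ** u ** d"
proof -
  assume "b \<in> Bset"
  then obtain e1 e2 e3 x y z where b: "b = mat3 e1 x y 0 e2 z 0 0 e3" and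
    h: "e1 \<in> Eis" "e2 \<in> Eis" "e3 \<in> Eis" "x \<in> Eis" "y \<in> Eis" "z \<in> Eis" "e1*e2*e3 = 1"
    unfolding Bset_def by blast
  define x' where "x' = x*e1*e3"
  define z' where "z' = z*e1*e2"
  define y' where "y' = y*e1*e2"
  obtain al p where al: "al \<in> small_res" "p \<in> Eis" "x' = al + 3*p" using Eis_mod3[of x'] h unfolding x'_def by auto
  obtain ga r where ga: "ga \<in> small_res" "r \<in> Eis" "z' = ga + 3*r" using Eis_mod3[of z'] h unfolding z'_def by auto
  obtain be q where be: "be \<in> small_res" "q \<in> Eis" "y' - 3*p*ga = be + 3*q"
    using Eis_mod3[of "y' - 3*p*ga"] h al ga small_res_Eis unfolding y'_def by auto
  define g where "g = mat3 1 (3*p) (3*q) 0 1 (3*r) 0 0 1"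
  define u where "u = mat3 1 al be 0 1 ga 0 0 1"
  define d where "d = mat3 e1 0 0 0 e2 0 0 0 e3"
  have "g \<in> Gamma_inf3" unfolding Gamma_char g_def using al ga be by blast
  moreover have "u \<in> U3" unfolding U3_def u_def using al ga be by blast
  moreover have "d \<in> D3" unfolding D3_def d_def using h by blast
  moreover have "b = g ** u ** d"
  proof -
    have e: "e1*e2*e3 = 1" "e1*(e2*e3) = 1" "e2*(e1*e3) = 1" "e3*(e1*e2) = 1" using h(7) by (simp_all add: algebra_simps)
    have "(al + 3*p) * e2 = x*(e1*e2*e3)" unfolding al(3)[symmetric] x'_def by (simp add: ac_simps)
    then have 1: "(al + 3*p) * e2 = x" using h(7) by simp
    have "(ga + 3*r) * e3 = z*(e1*e2*e3)" unfolding ga(3)[symmetric] z'_def by (simp add: ac_simps)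
    then have 2: "(ga + 3*r) * e3 = z" using h(7) by simp
    have "be + 3*p*ga + 3*q = y'" using be(3) by (simp add: algebra_simps)
    then have "(be + 3*p*ga + 3*q) * e3 = y*(e1*e2*e3)" unfolding y'_def by (simp add: ac_simps)
    then have 3: "(be + 3*p*ga + 3*q) * e3 = y" using h(7) by simp
    have "g ** u ** d = mat3 e1 (e2*(al + 3*p)) (e3*(be + 3*p*ga + 3*q)) 0 e2 (e3*(ga + 3*r)) 0 0 e3"
      unfolding g_def u_def d_def by (rule GUD_form)
    also have "... = b" unfolding b using 1 2 3 by (simp add: mult.commute)
    finally show ?thesis by simp
  qed
  ultimately show ?thesis by blast
qed

lemma GUD_inj: "g \<in> Gamma_inf3 \<Longrightarrow> u \<in> U3 \<Longrightarrow> d \<in> D3 \<Longrightarrow> g' \<in> Gamma_inf3 \<Longrightarrow> u' \<in> U3 \<Longrightarrow> d' \<in> D3 \<Longrightarrow>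
   g ** u ** d = g' ** u' ** d' \<Longrightarrow> u = u' \<and> d = d'"
proof -
  assume "g \<in> Gamma_inf3" "u \<in> U3" "d \<in> D3" "g' \<in> Gamma_inf3" "u' \<in> U3" "d' \<in> D3"
    and eq: "g ** u ** d = g' ** u' ** d'"
  then obtain p q r p' q' r' al be ga al' be' ga' i j k i' j' k' where
    g: "g = mat3 1 (3*p) (3*q) 0 1 (3*r) 0 0 1" "p \<in> Eis" "q \<in> Eis" "r \<in> Eis" and
    g': "g' = mat3 1 (3*p') (3*q') 0 1 (3*r') 0 0 1" "p' \<in> Eis" "q' \<in> Eis" "r' \<in> Eis" and
    u: "u = mat3 1 al be 0 1 ga 0 0 1" "al \<in> small_res" "be \<in> small_res" "ga \<in> small_res" and
    u': "u' = mat3 1 al' be' 0 1 ga' 0 0 1" "al' \<in> small_res" "be' \<in> small_res" "ga' \<in> small_res" and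
    d: "d = mat3 i 0 0 0 j 0 0 0 k" "i*j*k = 1" and
    d': "d' = mat3 i' 0 0 0 j' 0 0 0 k'"
    unfolding Gamma_char U3_def D3_def by blast
  have E0: "mat3 i (j*(al + 3*p)) (k*(be + 3*p*ga + 3*q)) 0 j (k*(ga + 3*r)) 0 0 k =
     mat3 i' (j'*(al' + 3*p')) (k'*(be' + 3*p'*ga' + 3*q')) 0 j' (k'*(ga' + 3*r')) 0 0 k'"
    using eq unfolding g g' u u' d d' GUD_form .
  have E: "i = i'" "j = j'" "k = k'" "j*(al + 3*p) = j'*(al' + 3*p')"
     "k*(be + 3*p*ga + 3*q) = k'*(be' + 3*p'*ga' + 3*q')" "k*(ga + 3*r) = k'*(ga' + 3*r')"
    using E0 unfolding mat3_eq_iff by blast+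
  have jk: "j \<noteq> 0" "k \<noteq> 0" using d(2) by auto
  have "al + 3*p = al' + 3*p'" using E(2,4) jk by simp
  then have "al - al' = 3*(p' - p)" by (simp add: algebra_simps)
  then have a: "al = al'" using small_res_cong[OF u(2) u'(2), of "p' - p"] g(2) g'(2) by simp
  have "ga + 3*r = ga' + 3*r'" using E(3,6) jk by simp
  then have "ga - ga' = 3*(r' - r)" by (simp add: algebra_simps)
  then have c: "ga = ga'" using small_res_cong[OF u(4) u'(4), of "r' - r"] g(4) g'(4) by simp
  have "be + 3*p*ga + 3*q = be' + 3*p'*ga' + 3*q'" using E(3,5) jk by simp
  then have "be - be' = 3*(p'*ga - p*ga + q' - q)" using c by (simp add: algebra_simps)
  then have b: "be = be'" using small_res_cong[OF u(3) u'(3), of "p'*ga - p*ga + q' - q"] g(2-4) g'(2-4) small_res_Eis[OF u(4)] by simp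
  show ?thesis unfolding u u' d d' using a b c E(1-3) by simp
qed

lemma Yset_cases:
  assumes "y \<in> Yset C R"
  shows "y = mat 1 \<or> (\<exists>a b c d. y = mat2 a b c d \<and> a \<in> Eis \<and> b \<in> Eis \<and> c \<in> Eis \<and> d \<in> Eis \<and>
            a*d - b*c = 1 \<and> c \<in> C \<and> a \<in> R c)"
proof -
  have "y = mat 1 \<or> (y \<in> SL2 \<and> y $ 2 $ 1 \<in> C \<and> y $ 1 $ 1 \<in> R (y $ 2 $ 1))"
    using assms unfolding Yset_def by blast
  then show ?thesis
  proof
    assume h: "y \<in> SL2 \<and> y $ 2 $ 1 \<in> C \<and> y $ 1 $ 1 \<in> R (y $ 2 $ 1)"
    have "y = mat2 (y$1$1) (y$1$2) (y$2$1) (y$2$2)" by (rule mat2_eta)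
    then show ?thesis using h by (metis SL2_mat2)
  qed simp
qed

lemma Yset_SL2: "y \<in> Yset C R \<Longrightarrow> y \<in> SL2"
  unfolding Yset_def SL2_def by (auto simp: forall_2 mat_def det_2)

lemma C_nz: "nonzero_rep_system C \<Longrightarrow> c \<in> C \<Longrightarrow> c \<noteq> 0 \<and> c \<in> Eis"
  unfolding nonzero_rep_system_def by blast

lemma Yset_nonI:
  assumes "nonzero_rep_system C" "y \<in> Yset C R" "y \<noteq> mat 1"
  shows "\<exists>a b c d. y = mat2 a b c d \<and> a \<in> Eis \<and> b \<in> Eis \<and> c \<in> Eis \<and> d \<in> Eis \<and>
            a*d - b*c = 1 \<and> c \<in> C \<and> a \<in> R c \<and> c \<noteq> 0"
  using Yset_cases[OF assms(2)] assms(3) C_nz[OF assms(1)] by blast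

lemma mat2_in_Yset_I: "nonzero_rep_system C \<Longrightarrow> mat2 a b c d \<in> Yset C R \<Longrightarrow> c \<noteq> 0 \<Longrightarrow> mat2 a b c d \<noteq> mat 1"
  by (simp add: mat1_2 mat2_eq_iff)

lemma Yset_I: "a \<in> Eis \<Longrightarrow> b \<in> Eis \<Longrightarrow> c \<in> Eis \<Longrightarrow> d \<in> Eis \<Longrightarrow> a*d - b*c = 1 \<Longrightarrow> c \<in> C \<Longrightarrow> a \<in> R c \<Longrightarrow>
   mat2 a b c d \<in> Yset C R"
  unfolding Yset_def by (simp add: SL2_mat2)

lemma unit_I: "k \<in> Eis \<Longrightarrow> k' \<in> Eis \<Longrightarrow> k * k' = 1 \<Longrightarrow> k \<in> Eis_units"
  unfolding Eis_units_def by blast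

lemma CU:
  assumes "nonzero_rep_system C" "c \<in> C" "c' \<in> C" "k \<in> Eis" "k' \<in> Eis" "k * k' = 1" "c' = k * c"
  shows "c' = c"
proof -
  have cE: "c' \<in> Eis - {0}" using C_nz[OF assms(1) assms(3)] by blast
  then have ex: "\<exists>!c0. c0 \<in> C \<and> (\<exists>u \<in> Eis_units. c' = u * c0)"
    using assms(1) unfolding nonzero_rep_system_def by blast
  have "\<exists>u \<in> Eis_units. c' = u * c'" using unit_I[of 1 1] by auto
  moreover have "\<exists>u \<in> Eis_units. c' = u * c" using unit_I[OF assms(4,5,6)] assms(7) by blast
  ultimately show ?thesis using ex assms(2,3) by blast
qed

lemma RU:
  assumes "residue_rep_system c A" "a \<in> A" "a' \<in> A" "t \<in> Eis" "a - a' = c * t"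
  shows "a = a'"
proof -
  have aE: "a \<in> Eis" using assms(1,2) unfolding residue_rep_system_def by blast
  then have ex: "\<exists>!a0. a0 \<in> A \<and> (\<exists>t \<in> Eis. a - a0 = c * t)"
    using assms(1) unfolding residue_rep_system_def by blast
  have "\<exists>t \<in> Eis. a - a = c * t" by (rule bexI[of _ 0]) auto
  then show ?thesis using ex assms by blast
qed

lemma YL:
  assumes C: "nonzero_rep_system C" and R: "\<forall>c \<in> C. residue_rep_system c (R c)"
    and y: "y \<in> Yset C R" "y \<noteq> mat 1" and y': "y' \<in> Yset C R" "y' \<noteq> mat 1"
    and l: "l \<in> Eis" "l' \<in> Eis" "l \<noteq> 0"
    and e1: "l' * y' $ 2 $ 1 = l * y $ 2 $ 1" and e2: "l' * y' $ 2 $ 2 = l * y $ 2 $ 2"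
  shows "y = y' \<and> l = l'"
proof -
  obtain a b c d where Y: "y = mat2 a b c d" "a \<in> Eis" "b \<in> Eis" "c \<in> Eis" "d \<in> Eis"
    "a*d - b*c = 1" "c \<in> C" "a \<in> R c" "c \<noteq> 0"
    using Yset_nonI[OF C y] by blast
  obtain a' b' c' d' where Y': "y' = mat2 a' b' c' d'" "a' \<in> Eis" "b' \<in> Eis" "c' \<in> Eis" "d' \<in> Eis"
    "a'*d' - b'*c' = 1" "c' \<in> C" "a' \<in> R c'" "c' \<noteq> 0"
    using Yset_nonI[OF C y'] by blast
  have E1: "l' * c' = l * c" and E2: "l' * d' = l * d" using e1 e2 unfolding Y(1) Y'(1) by simp_all
  define k where "k = a*d' - b*c'"
  define k' where "k' = a'*d - b'*c"
  have kE: "k \<in> Eis" "k' \<in> Eis" unfolding k_def k'_def using Y Y' by auto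
  have lk: "l = l' * k"
  proof -
    have "l = l * (a*d - b*c)" using Y(6) by simp
    also have "... = a*(l*d) - b*(l*c)" by (simp add: algebra_simps)
    also have "... = a*(l'*d') - b*(l'*c')" using E1 E2 by simp
    also have "... = l' * k" unfolding k_def by (simp add: algebra_simps)
    finally show ?thesis .
  qed
  have l'ne: "l' \<noteq> 0" using lk l(3) by auto
  have lk': "l' = l * k'"
  proof -
    have "l' = l' * (a'*d' - b'*c')" using Y'(6) by simp
    also have "... = a'*(l'*d') - b'*(l'*c')" by (simp add: algebra_simps)
    also have "... = a'*(l*d) - b'*(l*c)" using E1 E2 by simp
    also have "... = l * k'" unfolding k'_def by (simp add: algebra_simps)
    finally show ?thesis .
  qed
  have kk: "k * k' = 1"
  proof -
    have "l = l * k' * k" using lk unfolding lk' .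
    then have "l * 1 = l * (k * k')" by (simp add: ac_simps)
    then have "1 = k * k'" using mult_left_cancel[OF l(3), of 1 "k*k'"] by blast
    then show ?thesis by simp
  qed
  have cc: "c' = k * c"
  proof -
    have "l' * c' = l' * (k * c)" using E1 lk by (simp add: ac_simps)
    then show ?thesis using l'ne by simp
  qed
  have dd: "d' = k * d"
  proof -
    have "l' * d' = l' * (k * d)" using E2 lk by (simp add: ac_simps)
    then show ?thesis using l'ne by simp
  qed
  have ceq: "c' = c" using CU[OF C Y(7) Y'(7) kE(1) kE(2) kk cc] .
  then have k1: "k = 1" using cc Y(9) by (metis mult_cancel_right1)
  then have deq: "d' = d" using dd by simp
  have leq: "l = l'" using lk k1 by simp
  have "a - a' = c * (a'*b - a*b')"
  proof -
    have "a - a' = a * (a'*d - b'*c) - a' * (a*d - b*c)" using Y(6) Y'(6) ceq deq by simp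
    also have "... = c * (a'*b - a*b')" by (simp add: algebra_simps)
    finally show ?thesis .
  qed
  moreover have "a' \<in> R c" using Y'(8) ceq by simp
  ultimately have aeq: "a = a'" using RU[of c "R c" a a' "a'*b - a*b'"] R Y(7) Y(8) Y(2,3) Y'(2,3) by auto
  have "b * c = b' * c" using Y(6) Y'(6) ceq deq aeq by (simp add: algebra_simps)
  then have "b = b'" using Y(9) by simp
  then show ?thesis using aeq ceq deq leq Y(1) Y'(1) by simp
qed

lemma L2:
  fixes p q r w :: complex
  assumes C: "nonzero_rep_system C" and R: "\<forall>c \<in> C. residue_rep_system c (R c)"
    and E: "p \<in> Eis" "q \<in> Eis" "r \<in> Eis" "w \<in> Eis" "dd \<in> Eis" and det: "(p*w - q*r) * dd = 1"
  shows "\<exists>b11 b12 b22 a b c d. b11 \<in> Eis \<and> b12 \<in> Eis \<and> b22 \<in> Eis \<and> mat2 a b c d \<in> Yset C R \<and>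
     b11 * b22 = p*w - q*r \<and> p = b11*a + b12*c \<and> q = b11*b + b12*d \<and> r = b22*c \<and> w = b22*d \<and>
     (r = 0 \<longrightarrow> mat2 a b c d = mat 1) \<and> (r \<noteq> 0 \<longrightarrow> mat2 a b c d \<noteq> mat 1)"
proof (cases "r = 0")
  case True
  have Y: "mat2 1 0 0 1 \<in> Yset C R" unfolding Yset_def mat1_2[symmetric] by simp
  show ?thesis
    by (rule exI[of _ p], rule exI[of _ q], rule exI[of _ w], rule exI[of _ 1], rule exI[of _ 0], rule exI[of _ 0], rule exI[of _ 1])
      (use Y True E in \<open>simp add: mat1_2\<close>)
next
  case False
  have "r \<in> Eis - {0}" using E(3) False by simp
  then obtain c u where c: "c \<in> C" "u \<in> Eis_units" "r = u * c"
    using C unfolding nonzero_rep_system_def by blast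
  obtain u' where u: "u \<in> Eis" "u' \<in> Eis" "u * u' = 1" using c(2) unfolding Eis_units_def by blast
  have cE: "c \<in> Eis" "c \<noteq> 0" using C_nz[OF C c(1)] by auto
  define de where "de = p*w - q*r"
  have deE: "de \<in> Eis" unfolding de_def using E by simp
  have dd: "de * dd = 1" using det unfolding de_def .
  have RR: "residue_rep_system c (R c)" using R c(1) by blast
  have wE: "u*dd*p \<in> Eis" using u E by simp
  then obtain a t where a: "a \<in> R c" "t \<in> Eis" "u*dd*p - a = c * t"
    using RR unfolding residue_rep_system_def by blast
  have aE: "a \<in> Eis" using RR a(1) unfolding residue_rep_system_def by blast
  define d where "d = u' * w"
  define b where "b = u*dd*q - t*d"
  define b11 where "b11 = de * u'"
  define b12 where "b12 = b11 * t"
  have a': "a = u*dd*p - c*t" using a(3) by (simp add: algebra_simps)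
  have det1: "a*d - b*c = 1"
  proof -
    have "a*d - b*c = dd*(p*w*(u*u') - q*(u*c))" unfolding a' d_def b_def by (simp add: algebra_simps)
    also have "... = 1" using dd u(3) c(3) unfolding de_def by (simp add: mult.commute)
    finally show ?thesis .
  qed
  have E2: "d \<in> Eis" "b \<in> Eis" "b11 \<in> Eis" "b12 \<in> Eis"
    unfolding d_def b_def b12_def b11_def using u E a(2) deE by auto
  have Y: "mat2 a b c d \<in> Yset C R" by (rule Yset_I) (use aE E2 cE det1 c a in auto)
  have e1: "b11 * u = de" unfolding b11_def using u(3) by (simp add: ac_simps)
  have e2: "p = b11*a + b12*c"
  proof -
    have "b11*a + b12*c = de*dd*(u*u')*p" unfolding b12_def b11_def a' by (simp add: algebra_simps)
    then show ?thesis using dd u(3) by simp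
  qed
  have e3: "q = b11*b + b12*d"
  proof -
    have "b11*b + b12*d = de*dd*(u*u')*q" unfolding b12_def b11_def b_def by (simp add: algebra_simps)
    then show ?thesis using dd u(3) by simp
  qed
  have e4: "w = u*d" unfolding d_def using u(3) by (simp add: mult.assoc[symmetric])
  have nI: "mat2 a b c d \<noteq> mat 1" using cE by (simp add: mat1_2 mat2_eq_iff)
  show ?thesis unfolding de_def
    by (rule exI[of _ b11], rule exI[of _ b12], rule exI[of _ u], rule exI[of _ a], rule exI[of _ b], rule exI[of _ c], rule exI[of _ d])
     (use nI Y e1 e2 e3 e4 c(3) E2 u(1) False in \<open>simp add: de_def\<close>)
qed

lemma phi1_adj:
  assumes "a*d - b*c = 1"
  shows "phi1 (mat2 d (-b) (-c) a) ** phi1 (mat2 a b c d) = mat 1"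
    "phi1 (mat2 a b c d) ** phi1 (mat2 d (-b) (-c) a) = mat 1"
  using assms by (simp_all add: phi1_mat2 mat3_mult mat1_3 algebra_simps)

lemma phi2_adj:
  assumes "a*d - b*c = 1"
  shows "phi2 (mat2 d (-b) (-c) a) ** phi2 (mat2 a b c d) = mat 1"
    "phi2 (mat2 a b c d) ** phi2 (mat2 d (-b) (-c) a) = mat 1"
  using assms by (simp_all add: phi2_mat2 mat3_mult mat1_3 algebra_simps)

lemma adj_SL2: "mat2 a b c d \<in> SL2 \<Longrightarrow> mat2 d (-b) (-c) a \<in> SL2"
  by (simp add: SL2_mat2 algebra_simps)

lemma SL3_obt: "M \<in> SL3 \<Longrightarrow> (\<And>m11 m12 m13 m21 m22 m23 m31 m32 m33. M = mat3 m11 m12 m13 m21 m22 m23 m31 m32 m33 \<Longrightarrow>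
   m11 \<in> Eis \<Longrightarrow> m12 \<in> Eis \<Longrightarrow> m13 \<in> Eis \<Longrightarrow> m21 \<in> Eis \<Longrightarrow> m22 \<in> Eis \<Longrightarrow> m23 \<in> Eis \<Longrightarrow>
   m31 \<in> Eis \<Longrightarrow> m32 \<in> Eis \<Longrightarrow> m33 \<in> Eis \<Longrightarrow>
   m11*m22*m33 + m12*m23*m31 + m13*m21*m32 - m11*m23*m32 - m12*m21*m33 - m13*m22*m31 = 1 \<Longrightarrow> P) \<Longrightarrow> P"
  by (metis SL3_mat3 mat3_eta)

lemma EX1:
  assumes C: "nonzero_rep_system C" and R: "\<forall>c \<in> C. residue_rep_system c (R c)"
    and M: "M \<in> SL3" "M $ 3 $ 1 = 0" "M $ 3 $ 2 = 0"
  shows "\<exists>b y. b \<in> Bset \<and> y \<in> Yset C R \<and> M = b ** phi1 y"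
proof -
  obtain m11 m12 m13 m21 m22 m23 m31 m32 m33 where
    Mm: "M = mat3 m11 m12 m13 m21 m22 m23 m31 m32 m33" and
    E: "m11 \<in> Eis" "m12 \<in> Eis" "m13 \<in> Eis" "m21 \<in> Eis" "m22 \<in> Eis" "m23 \<in> Eis" "m33 \<in> Eis" and
    det: "m11*m22*m33 + m12*m23*m31 + m13*m21*m32 - m11*m23*m32 - m12*m21*m33 - m13*m22*m31 = 1"
    using SL3_obt[OF M(1)] by metis
  have z: "m31 = 0" "m32 = 0" using M(2,3) Mm by simp_all
  have det': "(m11*m22 - m12*m21) * m33 = 1" using det z by (simp add: algebra_simps)
  obtain b11 b12 b22 a b c d where L: "b11 \<in> Eis" "b12 \<in> Eis" "b22 \<in> Eis" "mat2 a b c d \<in> Yset C R"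
     "b11 * b22 = m11*m22 - m12*m21" "m11 = b11*a + b12*c" "m12 = b11*b + b12*d" "m21 = b22*c" "m22 = b22*d"
    using L2[OF C R E(1,2,4,5,7) det'] by blast
  define B where "B = mat3 b11 b12 m13 0 b22 m23 0 0 m33"
  have "B \<in> Bset" unfolding B_def
    by (rule Bset_I) (use L E det' in auto)
  moreover have "M = B ** phi1 (mat2 a b c d)"
    unfolding Mm B_def phi1_mat2 mat3_mult using L z by simp
  ultimately show ?thesis using L(4) by blast
qed

lemma EX2a:
  assumes C: "nonzero_rep_system C" and R: "\<forall>c \<in> C. residue_rep_system c (R c)"
    and M: "M \<in> SL3" "M $ 3 $ 1 = 0" "M $ 3 $ 2 \<noteq> 0"
  shows "\<exists>b y3 y2. b \<in> Bset \<and> y3 \<in> Yset C R \<and> y2 \<in> Yset C R \<and> y2 \<noteq> mat 1 \<and> M = b ** phi1 y3 ** phi2 y2"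
proof -
  obtain m11 m12 m13 m21 m22 m23 m31 m32 m33 where
    Mm: "M = mat3 m11 m12 m13 m21 m22 m23 m31 m32 m33" and
    E: "m11 \<in> Eis" "m12 \<in> Eis" "m13 \<in> Eis" "m21 \<in> Eis" "m22 \<in> Eis" "m23 \<in> Eis" "m32 \<in> Eis" "m33 \<in> Eis" and
    det: "m11*m22*m33 + m12*m23*m31 + m13*m21*m32 - m11*m23*m32 - m12*m21*m33 - m13*m22*m31 = 1"
    using SL3_obt[OF M(1)] by metis
  have z: "m31 = 0" "m32 \<noteq> 0" using M(2,3) Mm by simp_all
  define Q where "Q = m11*m22 - m12*m21"
  define P where "P = m11*m23 - m13*m21"
  have QP: "Q \<in> Eis" "P \<in> Eis" unfolding Q_def P_def using E by auto
  have det': "(Q*m33 - P*m32) * 1 = 1" using det z unfolding Q_def P_def by (simp add: algebra_simps)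
  obtain b11 b12 b22 a b c d where L: "b11 \<in> Eis" "b12 \<in> Eis" "b22 \<in> Eis" "mat2 a b c d \<in> Yset C R"
     "m32 = b22*c" "m33 = b22*d" "mat2 a b c d \<noteq> mat 1"
    using L2[OF C R QP(1) QP(2) E(7) E(8) Eis_1 det'] z(2) by blast
  have SL: "mat2 a b c d \<in> SL2" using L(4) by (rule Yset_SL2)
  then have dt: "a*d - b*c = 1" by (simp add: SL2_mat2)
  define M2 where "M2 = M ** phi2 (mat2 d (-b) (-c) a)"
  have M2SL: "M2 \<in> SL3" unfolding M2_def by (rule SL3_mult[OF M(1) phi2_SL3[OF adj_SL2[OF SL]]])
  have r3: "M2 $ 3 $ 1 = 0" "M2 $ 3 $ 2 = 0"
    unfolding M2_def Mm phi2_mat2 mat3_mult using z L(5,6) by (simp_all add: algebra_simps)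
  obtain B y3 where B: "B \<in> Bset" "y3 \<in> Yset C R" "M2 = B ** phi1 y3"
    using EX1[OF C R M2SL r3] by blast
  have "M2 ** phi2 (mat2 a b c d) = M"
    unfolding M2_def matrix_mul_assoc[symmetric] phi2_adj(1)[OF dt] by simp
  then have "M = B ** phi1 y3 ** phi2 (mat2 a b c d)" using B(3) by simp
  then show ?thesis using B L(4) L(7) by blast
qed

lemma EX2:
  assumes C: "nonzero_rep_system C" and R: "\<forall>c \<in> C. residue_rep_system c (R c)"
    and M: "M \<in> SL3" "\<not> (M $ 3 $ 1 = 0 \<and> M $ 3 $ 2 = 0)"
  shows "\<exists>b y3 y2 y1. b \<in> Bset \<and> y3 \<in> Yset C R \<and> y2 \<in> Yset C R \<and> y1 \<in> Yset C R \<and> y2 \<noteq> mat 1 \<and>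
     M = b ** phi1 y3 ** phi2 y2 ** phi1 y1"
proof (cases "M $ 3 $ 1 = 0")
  case True
  then have "M $ 3 $ 2 \<noteq> 0" using M(2) by simp
  then obtain b y3 y2 where h: "b \<in> Bset" "y3 \<in> Yset C R" "y2 \<in> Yset C R" "y2 \<noteq> mat 1" "M = b ** phi1 y3 ** phi2 y2"
    using EX2a[OF C R M(1) True] by blast
  have I: "mat 1 \<in> Yset C R" unfolding Yset_def by simp
  have "phi1 (mat 1) = mat 1" by (simp add: mat1_2 mat1_3 phi1_mat2)
  then have "M = b ** phi1 y3 ** phi2 y2 ** phi1 (mat 1)" using h(5) by simp
  then show ?thesis using h I by blast
next
  case False
  obtain m11 m12 m13 m21 m22 m23 m31 m32 m33 where
    Mm: "M = mat3 m11 m12 m13 m21 m22 m23 m31 m32 m33" and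
    E: "m31 \<in> Eis" "m32 \<in> Eis"
    using SL3_obt[OF M(1)] by metis
  have nz: "m31 \<noteq> 0" using False Mm by simp
  obtain g s t x w where G: "g \<in> Eis" "s \<in> Eis" "t \<in> Eis" "x \<in> Eis" "w \<in> Eis"
     "g = s*m31 + t*m32" "m31 = g*x" "m32 = g*w"
    using Eis_bezout[OF E] by blast
  have gx: "g \<noteq> 0" "x \<noteq> 0" using G(7) nz by auto
  have "g * (t*w - (-s)*x) = g * 1" using G(6-8) by (simp add: algebra_simps)
  then have det': "(t*w - (-s)*x) * 1 = 1" using gx(1) by simp
  obtain b11 b12 b22 a b c d where L: "b11 \<in> Eis" "b12 \<in> Eis" "b22 \<in> Eis" "mat2 a b c d \<in> Yset C R"
     "x = b22*c" "w = b22*d" "mat2 a b c d \<noteq> mat 1"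
    using L2[OF C R G(3) Eis_uminus[OF G(2)] G(4) G(5) Eis_1 det'] gx(2) by blast
  have SL: "mat2 a b c d \<in> SL2" using L(4) by (rule Yset_SL2)
  then have dt: "a*d - b*c = 1" by (simp add: SL2_mat2)
  define M1 where "M1 = M ** phi1 (mat2 d (-b) (-c) a)"
  have M1SL: "M1 \<in> SL3" unfolding M1_def by (rule SL3_mult[OF M(1) phi1_SL3[OF adj_SL2[OF SL]]])
  have b22: "b22 \<noteq> 0" using L(5) gx(2) by auto
  have r31: "M1 $ 3 $ 1 = 0"
  proof -
    have "M1 $ 3 $ 1 = m31*d - m32*c" unfolding M1_def Mm phi1_mat2 mat3_mult by simp
    also have "... = g*b22*(c*d - d*c)" unfolding G(7,8) L(5,6) by (simp add: algebra_simps)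
    finally show ?thesis by simp
  qed
  have r32: "M1 $ 3 $ 2 \<noteq> 0"
  proof -
    have "M1 $ 3 $ 2 = - m31*b + m32*a" unfolding M1_def Mm phi1_mat2 mat3_mult by simp
    also have "... = g*b22*(a*d - b*c)" unfolding G(7,8) L(5,6) by (simp add: algebra_simps)
    finally show ?thesis using dt gx b22 by simp
  qed
  obtain B y3 y2 where h: "B \<in> Bset" "y3 \<in> Yset C R" "y2 \<in> Yset C R" "y2 \<noteq> mat 1" "M1 = B ** phi1 y3 ** phi2 y2"
    using EX2a[OF C R M1SL r31 r32] by blast
  have "M1 ** phi1 (mat2 a b c d) = M"
    unfolding M1_def matrix_mul_assoc[symmetric] phi1_adj(1)[OF dt] by simp
  then have "M = B ** phi1 y3 ** phi2 y2 ** phi1 (mat2 a b c d)" using h(5) by simp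
  then show ?thesis using h L(4) by blast
qed

lemma Yset_form:
  assumes C: "nonzero_rep_system C" and y: "y \<in> Yset C R"
  shows "\<exists>a b c d. y = mat2 a b c d \<and> a*d - b*c = 1 \<and> (y = mat 1 \<longleftrightarrow> c = 0)"
proof (cases "y = mat 1")
  case True
  show ?thesis by (rule exI[of _ 1], rule exI[of _ 0], rule exI[of _ 0], rule exI[of _ 1]) (use True in \<open>simp add: mat1_2\<close>)
next
  case False
  then show ?thesis using Yset_nonI[OF C y False] by (auto simp: mat1_2 mat2_eq_iff)
qed

lemma cancel1: "a*d - b*c = 1 \<Longrightarrow> X ** phi1 (mat2 a b c d) = X' ** phi1 (mat2 a b c d) \<Longrightarrow> X = X'"
  by (metis matrix_mul_assoc matrix_mul_rid phi1_adj(2))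

lemma cancel2: "a*d - b*c = 1 \<Longrightarrow> X ** phi2 (mat2 a b c d) = X' ** phi2 (mat2 a b c d) \<Longrightarrow> X = X'"
  by (metis matrix_mul_assoc matrix_mul_rid phi2_adj(2))

lemma Bset_obt: "B \<in> Bset \<Longrightarrow> (\<And>e1 e2 e3 x y z. B = mat3 e1 x y 0 e2 z 0 0 e3 \<Longrightarrow> e1 \<in> Eis \<Longrightarrow> e2 \<in> Eis \<Longrightarrow> e3 \<in> Eis \<Longrightarrow>
   x \<in> Eis \<Longrightarrow> y \<in> Eis \<Longrightarrow> z \<in> Eis \<Longrightarrow> e1*e2*e3 = 1 \<Longrightarrow> P) \<Longrightarrow> P"
  unfolding Bset_def by blast

lemma UA:
  assumes C: "nonzero_rep_system C" and R: "\<forall>c \<in> C. residue_rep_system c (R c)"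
    and B: "B \<in> Bset" and y: "y \<in> Yset C R" and y': "y' \<in> Yset C R"
    and eq: "B ** phi1 y = phi1 y'"
  shows "y = y'"
proof -
  obtain e1 e2 e3 x yy z where b: "B = mat3 e1 x yy 0 e2 z 0 0 e3" "e2 \<in> Eis" "e1*e2*e3 = 1"
    using Bset_obt[OF B] by metis
  obtain a b c d where Y: "y = mat2 a b c d" "y = mat 1 \<longleftrightarrow> c = 0" using Yset_form[OF C y] by blast
  obtain a' b' c' d' where Y': "y' = mat2 a' b' c' d'" "y' = mat 1 \<longleftrightarrow> c' = 0" using Yset_form[OF C y'] by blast
  have e: "c' = e2*c" "d' = e2*d"
    using eq unfolding b(1) Y(1) Y'(1) phi1_mat2 mat3_mult mat3_eq_iff by simp_all
  have e2: "e2 \<noteq> 0" using b(3) by auto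
  show ?thesis
  proof (cases "y = mat 1")
    case True
    then have "c' = 0" using Y(2) e by simp
    then show ?thesis using True Y'(2) by simp
  next
    case False
    then have "c' \<noteq> 0" using Y(2) e e2 by simp
    then have "y' \<noteq> mat 1" using Y'(2) by simp
    moreover have "1 * y' $ 2 $ 1 = e2 * y $ 2 $ 1" "1 * y' $ 2 $ 2 = e2 * y $ 2 $ 2"
      using e unfolding Y(1) Y'(1) by simp_all
    ultimately show ?thesis using YL[OF C R y False y' _ b(2) Eis_1 e2] by blast
  qed
qed

lemma row3_B:
  "(mat3 e1 x yy 0 e2 z 0 0 e3 ** X) $ 3 $ j = e3 * X $ 3 $ j"
  by (simp add: matrix_matrix_mult_def sum_3)

lemma row3_phi1: "(phi1 y ** X) $ 3 $ j = X $ 3 $ j"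
  by (simp add: matrix_matrix_mult_def sum_3 phi1_def)

lemma row3_phi2:
  "(X ** phi2 (mat2 a b c d)) $ 3 $ 1 = X $ 3 $ 1"
  "(X ** phi2 (mat2 a b c d)) $ 3 $ 2 = X $ 3 $ 2 * a + X $ 3 $ 3 * c"
  "(X ** phi2 (mat2 a b c d)) $ 3 $ 3 = X $ 3 $ 2 * b + X $ 3 $ 3 * d"
  by (simp_all add: matrix_matrix_mult_def sum_3 phi2_mat2)

lemma row3_phi1r:
  "(X ** phi1 (mat2 a b c d)) $ 3 $ 1 = X $ 3 $ 1 * a + X $ 3 $ 2 * c"
  "(X ** phi1 (mat2 a b c d)) $ 3 $ 2 = X $ 3 $ 1 * b + X $ 3 $ 2 * d"
  "(X ** phi1 (mat2 a b c d)) $ 3 $ 3 = X $ 3 $ 3"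
  by (simp_all add: matrix_matrix_mult_def sum_3 phi1_mat2)

lemma row3_id: "(mat 1 :: complex^3^3) $ 3 $ 1 = 0" "(mat 1 :: complex^3^3) $ 3 $ 2 = 0" "(mat 1 :: complex^3^3) $ 3 $ 3 = 1"
  by (simp_all add: mat1_3)

lemma assoc_B: "B ** (X ** Y) = B ** X ** Y" by (rule matrix_mul_assoc)

lemma UB:
  assumes C: "nonzero_rep_system C" and R: "\<forall>c \<in> C. residue_rep_system c (R c)"
    and B: "B \<in> Bset" and y: "y3 \<in> Yset C R" "y2 \<in> Yset C R" "y2 \<noteq> mat 1"
    and y': "y3' \<in> Yset C R" "y2' \<in> Yset C R" "y2' \<noteq> mat 1"
    and eq: "B ** phi1 y3 ** phi2 y2 = phi1 y3' ** phi2 y2'"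
  shows "y3 = y3' \<and> y2 = y2'"
proof -
  obtain e1 e2 e3 x yy z where b: "B = mat3 e1 x yy 0 e2 z 0 0 e3" "e3 \<in> Eis" "e1*e2*e3 = 1"
    using Bset_obt[OF B] by metis
  obtain a b c d where Y: "y2 = mat2 a b c d" "a*d - b*c = 1" using Yset_form[OF C y(2)] by blast
  obtain a' b' c' d' where Y': "y2' = mat2 a' b' c' d'" using Yset_form[OF C y'(2)] by blast
  have L: "(B ** phi1 y3 ** phi2 y2) $ 3 $ 2 = e3 * c" "(B ** phi1 y3 ** phi2 y2) $ 3 $ 3 = e3 * d"
    unfolding matrix_mul_assoc[symmetric] b(1) row3_B row3_phi1 unfolding Y(1) row3_phi2
    by (simp_all add: phi1_def phi2_mat2)
  have R': "(phi1 y3' ** phi2 y2') $ 3 $ 2 = c'" "(phi1 y3' ** phi2 y2') $ 3 $ 3 = d'"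
    unfolding row3_phi1 unfolding Y'(1) phi2_mat2 by simp_all
  have "1 * y2' $ 2 $ 1 = e3 * y2 $ 2 $ 1" "1 * y2' $ 2 $ 2 = e3 * y2 $ 2 $ 2"
    using L R' eq unfolding Y(1) Y'(1) by simp_all
  moreover have "e3 \<noteq> 0" using b(3) by auto
  ultimately have "y2 = y2'" using YL[OF C R y(2) y(3) y'(2) y'(3) b(2) Eis_1] by blast
  then have "B ** phi1 y3 = phi1 y3'" using eq cancel2[OF Y(2)] unfolding Y(1) by (metis Y(1))
  then show ?thesis using UA[OF C R B y(1) y'(1)] \<open>y2 = y2'\<close> by simp
qed

lemma phi_I: "phi1 (mat 1) = mat 1" "phi2 (mat 1) = mat 1"
  by (simp_all add: mat1_2 mat1_3 phi1_mat2 phi2_mat2)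

lemma row3_full:
  fixes B :: "complex^3^3"
  assumes "B = mat3 e1 x yy 0 e2 z 0 0 e3"
  shows "(B ** phi1 y3 ** phi2 (mat2 a2 b2 c2 d2) ** phi1 (mat2 a1 b1 c1 d1)) $ 3 $ 1 = e3*c2*c1"
    "(B ** phi1 y3 ** phi2 (mat2 a2 b2 c2 d2) ** phi1 (mat2 a1 b1 c1 d1)) $ 3 $ 2 = e3*c2*d1"
    "(B ** phi1 y3 ** phi2 (mat2 a2 b2 c2 d2) ** phi1 (mat2 a1 b1 c1 d1)) $ 3 $ 3 = e3*d2"
  unfolding row3_phi1r row3_phi2 unfolding matrix_mul_assoc[symmetric] assms row3_B row3_phi1
  by (simp_all add: phi1_def)

lemma Yset_Eis: "y \<in> Yset C R \<Longrightarrow> y $ i $ j \<in> Eis"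
  using Yset_SL2 unfolding SL2_def by blast

lemma UNI:
  assumes C: "nonzero_rep_system C" and R: "\<forall>c \<in> C. residue_rep_system c (R c)"
    and B: "B \<in> Bset"
    and y: "y3 \<in> Yset C R" "y2 \<in> Yset C R" "y1 \<in> Yset C R" "y2 = mat 1 \<longrightarrow> y1 = mat 1"
    and y': "y3' \<in> Yset C R" "y2' \<in> Yset C R" "y1' \<in> Yset C R" "y2' = mat 1 \<longrightarrow> y1' = mat 1"
    and eq: "B ** phi1 y3 ** phi2 y2 ** phi1 y1 = phi1 y3' ** phi2 y2' ** phi1 y1'"
  shows "y3 = y3' \<and> y2 = y2' \<and> y1 = y1'"
proof -
  obtain e1 e2 e3 x yy z where b: "B = mat3 e1 x yy 0 e2 z 0 0 e3" "e3 \<in> Eis" "e1*e2*e3 = 1"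
    using Bset_obt[OF B] by metis
  have e3: "e3 \<noteq> 0" using b(3) by auto
  obtain a1 b1 c1 d1 where Y1: "y1 = mat2 a1 b1 c1 d1" "a1*d1 - b1*c1 = 1" "y1 = mat 1 \<longleftrightarrow> c1 = 0"
    using Yset_form[OF C y(3)] by blast
  obtain a2 b2 c2 d2 where Y2: "y2 = mat2 a2 b2 c2 d2" "a2*d2 - b2*c2 = 1" "y2 = mat 1 \<longleftrightarrow> c2 = 0"
    using Yset_form[OF C y(2)] by blast
  obtain a1' b1' c1' d1' where Y1': "y1' = mat2 a1' b1' c1' d1'" "a1'*d1' - b1'*c1' = 1" "y1' = mat 1 \<longleftrightarrow> c1' = 0"
    using Yset_form[OF C y'(3)] by blast
  obtain a2' b2' c2' d2' where Y2': "y2' = mat2 a2' b2' c2' d2'" "a2'*d2' - b2'*c2' = 1" "y2' = mat 1 \<longleftrightarrow> c2' = 0"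
    using Yset_form[OF C y'(2)] by blast
  have I3: "(mat 1 :: complex^3^3) = mat3 1 0 0 0 1 0 0 0 1" by (rule mat1_3)
  have eq': "B ** phi1 y3 ** phi2 y2 ** phi1 y1 = mat 1 ** phi1 y3' ** phi2 y2' ** phi1 y1'"
    using eq by simp
  have r1: "e3*c2*c1 = c2'*c1'" and r2: "e3*c2*d1 = c2'*d1'"
    using arg_cong[OF eq', of "\<lambda>M. M $ 3 $ 1"] arg_cong[OF eq', of "\<lambda>M. M $ 3 $ 2"]
    unfolding Y1(1) Y2(1) Y1'(1) Y2'(1) row3_full[OF b(1)] row3_full[OF I3] by simp_all
  show ?thesis
  proof (cases "y2 = mat 1")
    case True
    then have "y1 = mat 1" using y(4) by simp
    show ?thesis
    proof (cases "y2' = mat 1")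
      case True': True
      then have "y1' = mat 1" using y'(4) by simp
      then have "B ** phi1 y3 = phi1 y3'" using eq \<open>y1 = mat 1\<close> True True' by (simp add: phi_I)
      then show ?thesis using UA[OF C R B y(1) y'(1)] \<open>y1 = mat 1\<close> True True' \<open>y1' = mat 1\<close> by simp
    next
      case False
      then have "c2' \<noteq> 0" using Y2'(3) by simp
      moreover have "c2 = 0" using True Y2(3) by simp
      ultimately have "c1' = 0" "d1' = 0" using r1 r2 by simp_all
      then show ?thesis using Y1'(2) by simp
    qed
  next
    case False
    then have c2: "c2 \<noteq> 0" using Y2(3) by simp
    show ?thesis
    proof (cases "y2' = mat 1")
      case True
      then have "c2' = 0" using Y2'(3) by simp
      then have "c1 = 0" "d1 = 0" using r1 r2 e3 c2 by simp_all
      then show ?thesis using Y1(2) by simp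
    next
      case False': False
      then have c2': "c2' \<noteq> 0" using Y2'(3) by simp
      have y1eq: "y1 = y1'"
      proof (cases "y1 = mat 1")
        case True
        then have "c1' = 0" using r1 Y1(3) c2' by simp
        then show ?thesis using True Y1'(3) by simp
      next
        case F1: False
        then have "c1 \<noteq> 0" using Y1(3) by simp
        then have "c1' \<noteq> 0" using r1 e3 c2 by auto
        then have F1': "y1' \<noteq> mat 1" using Y1'(3) by simp
        have lE: "e3*c2 \<in> Eis" "c2' \<in> Eis" using b(2) Yset_Eis[OF y(2), of 2 1] Yset_Eis[OF y'(2), of 2 1]
          unfolding Y2(1) Y2'(1) by simp_all
        have "c2' * y1' $ 2 $ 1 = (e3*c2) * y1 $ 2 $ 1" "c2' * y1' $ 2 $ 2 = (e3*c2) * y1 $ 2 $ 2"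
          using r1 r2 unfolding Y1(1) Y1'(1) by simp_all
        then show ?thesis using YL[OF C R y(3) F1 y'(3) F1' lE(1) lE(2)] e3 c2 by simp
      qed
      have "B ** phi1 y3 ** phi2 y2 = phi1 y3' ** phi2 y2'"
        using eq cancel1[OF Y1(2)] unfolding y1eq[symmetric] Y1(1) by blast
      then show ?thesis using UB[OF C R B y(1) y(2) False y'(1) y'(2) False'] y1eq by simp
    qed
  qed
qed

fun idx :: "cell_index \<Rightarrow> (complex^2^2) \<times> (complex^2^2) \<times> (complex^2^2) \<times> (complex^3^3) \<times> (complex^3^3)" where
  "idx (Cell1 y d u) = (y, mat 1, mat 1, d, u)"
| "idx (Cell2 y1 y2 d u) = (mat 1, y2, y1, d, u)"
| "idx (Cell3 y1 y2 y3 d u) = (y3, y2, y1, d, u)"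

lemma I_Yset: "mat 1 \<in> Yset C R" unfolding Yset_def by simp

lemma idx_valid:
  assumes "valid_index C R i" "idx i = (y3, y2, y1, d, u)"
  shows "y3 \<in> Yset C R \<and> y2 \<in> Yset C R \<and> y1 \<in> Yset C R \<and> (y2 = mat 1 \<longrightarrow> y1 = mat 1) \<and> d \<in> D3 \<and> u \<in> U3"
  using assms I_Yset by (cases i) auto

lemma idx_inj:
  assumes "valid_index C R i" "valid_index C R j" "idx i = idx j"
  shows "i = j"
  using assms by (cases i; cases j) auto

lemma cell_idx:
  assumes "idx i = (y3, y2, y1, d, u)"
  shows "cell i = (\<lambda>g. g ** u ** d ** phi1 y3 ** phi2 y2 ** phi1 y1) ` Gamma_inf3"
  using assms by (cases i) (auto simp: phi_I)

lemma U3_SL3: "u \<in> U3 \<Longrightarrow> u \<in> SL3"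
  by (erule U3_obt) (simp add: SL3_mat3 small_res_Eis)

lemma D3_SL3: "d \<in> D3 \<Longrightarrow> d \<in> SL3"
  by (erule D3_obt) (simp add: SL3_mat3)

lemma Gamma_SL3: "g \<in> Gamma_inf3 \<Longrightarrow> g \<in> SL3"
  unfolding Gamma_inf3_def Gamma3_def by blast

lemma assoc4: "X ** (Y ** a ** b ** c) = X ** Y ** a ** b ** c"
  by (simp add: matrix_mul_assoc)

theorem theorem3p1:
  fixes C :: "complex set" and R :: "complex \<Rightarrow> complex set"
  assumes "nonzero_rep_system C"
    and "\<forall>c \<in> C. residue_rep_system c (R c)"
  shows "(\<Union>i \<in> {i. valid_index C R i}. cell i) = SL3 \<and>
    (\<forall>i j. valid_index C R i \<longrightarrow> valid_index C R j \<longrightarrow> i \<noteq> j \<longrightarrow> cell i \<inter> cell j = {})"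
proof (intro conjI allI impI)
  note CC = assms(1) and RR = assms(2)
  show "(\<Union>i \<in> {i. valid_index C R i}. cell i) = SL3"
  proof
    show "(\<Union>i \<in> {i. valid_index C R i}. cell i) \<subseteq> SL3"
    proof clarify
      fix i x assume v: "valid_index C R i" and x: "x \<in> cell i"
      obtain y3 y2 y1 d u where ix: "idx i = (y3, y2, y1, d, u)" by (metis prod_cases5)
      have h: "y3 \<in> Yset C R" "y2 \<in> Yset C R" "y1 \<in> Yset C R" "d \<in> D3" "u \<in> U3"
        using idx_valid[OF v ix] by auto
      from x obtain g where g: "g \<in> Gamma_inf3" "x = g ** u ** d ** phi1 y3 ** phi2 y2 ** phi1 y1"
        unfolding cell_idx[OF ix] by blast
      have s: "g \<in> SL3" "u \<in> SL3" "d \<in> SL3" "phi1 y3 \<in> SL3" "phi2 y2 \<in> SL3" "phi1 y1 \<in> SL3"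
        using Gamma_SL3[OF g(1)] U3_SL3[OF h(5)] D3_SL3[OF h(4)] phi1_SL3[OF Yset_SL2[OF h(1)]]
          phi2_SL3[OF Yset_SL2[OF h(2)]] phi1_SL3[OF Yset_SL2[OF h(3)]] by auto
      show "x \<in> SL3" unfolding g(2) by (intro SL3_mult s)
    qed
  next
    show "SL3 \<subseteq> (\<Union>i \<in> {i. valid_index C R i}. cell i)"
    proof
      fix M assume M: "M \<in> SL3"
      show "M \<in> (\<Union>i \<in> {i. valid_index C R i}. cell i)"
      proof (cases "M $ 3 $ 1 = 0 \<and> M $ 3 $ 2 = 0")
        case True
        obtain b y where hb: "b \<in> Bset" "y \<in> Yset C R" "M = b ** phi1 y"
          using EX1[OF CC RR M] True by blast
        obtain g u d where gud: "g \<in> Gamma_inf3" "u \<in> U3" "d \<in> D3" "b = g ** u ** d"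
          using B_GUD[OF hb(1)] by blast
        have "valid_index C R (Cell1 y d u)" using hb gud by simp
        moreover have "M \<in> cell (Cell1 y d u)" using hb(3) gud by auto
        ultimately show ?thesis by blast
      next
        case False
        obtain b y3 y2 y1 where h: "b \<in> Bset" "y3 \<in> Yset C R" "y2 \<in> Yset C R" "y1 \<in> Yset C R" "y2 \<noteq> mat 1"
            "M = b ** phi1 y3 ** phi2 y2 ** phi1 y1"
          using EX2[OF CC RR M False] by blast
        obtain g u d where gud: "g \<in> Gamma_inf3" "u \<in> U3" "d \<in> D3" "b = g ** u ** d"
          using B_GUD[OF h(1)] by blast
        show ?thesis
        proof (cases "y3 = mat 1")
          case True
          have "valid_index C R (Cell2 y1 y2 d u)" using h gud by simp
          moreover have "M \<in> cell (Cell2 y1 y2 d u)" using h(6) gud True by (auto simp: phi_I)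
          ultimately show ?thesis by blast
        next
          case False
          have "valid_index C R (Cell3 y1 y2 y3 d u)" using h gud False by simp
          moreover have "M \<in> cell (Cell3 y1 y2 y3 d u)" using h(6) gud by auto
          ultimately show ?thesis by blast
        qed
      qed
    qed
  qed
next
  fix i j assume vi: "valid_index C R i" and vj: "valid_index C R j" and ne: "i \<noteq> j"
  note CC = assms(1) and RR = assms(2)
  show "cell i \<inter> cell j = {}"
  proof (rule ccontr)
    assume "cell i \<inter> cell j \<noteq> {}"
    then obtain x where x: "x \<in> cell i" "x \<in> cell j" by blast
    obtain y3 y2 y1 d u where ix: "idx i = (y3, y2, y1, d, u)" by (metis prod_cases5)
    obtain y3' y2' y1' d' u' where jx: "idx j = (y3', y2', y1', d', u')" by (metis prod_cases5)
    have h: "y3 \<in> Yset C R" "y2 \<in> Yset C R" "y1 \<in> Yset C R" "y2 = mat 1 \<longrightarrow> y1 = mat 1" "d \<in> D3" "u \<in> U3"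
      using idx_valid[OF vi ix] by auto
    have h': "y3' \<in> Yset C R" "y2' \<in> Yset C R" "y1' \<in> Yset C R" "y2' = mat 1 \<longrightarrow> y1' = mat 1" "d' \<in> D3" "u' \<in> U3"
      using idx_valid[OF vj jx] by auto
    from x(1) obtain g where g: "g \<in> Gamma_inf3" "x = g ** u ** d ** phi1 y3 ** phi2 y2 ** phi1 y1"
      unfolding cell_idx[OF ix] by blast
    from x(2) obtain g' where g': "g' \<in> Gamma_inf3" "x = g' ** u' ** d' ** phi1 y3' ** phi2 y2' ** phi1 y1'"
      unfolding cell_idx[OF jx] by blast
    define B where "B = g ** u ** d"
    define B' where "B' = g' ** u' ** d'"
    have BB: "B \<in> Bset" "B' \<in> Bset" unfolding B_def B'_def using GUD_in_B g(1) g'(1) h h' by auto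
    obtain B'' where B'': "B'' \<in> Bset" "B'' ** B' = mat 1" using Bset_inv[OF BB(2)] by blast
    have eq: "B ** phi1 y3 ** phi2 y2 ** phi1 y1 = B' ** phi1 y3' ** phi2 y2' ** phi1 y1'"
      using g(2) g'(2) unfolding B_def B'_def by simp
    have "(B'' ** B) ** phi1 y3 ** phi2 y2 ** phi1 y1 = phi1 y3' ** phi2 y2' ** phi1 y1'"
      by (metis eq assoc4 B''(2) matrix_mul_lid)
    then have t: "y3 = y3' \<and> y2 = y2' \<and> y1 = y1'"
      using UNI[OF CC RR Bset_mult[OF B''(1) BB(1)] h(1-4) h'(1-4)] by blast
    obtain a1 b1 c1 d1 where Y1: "y1 = mat2 a1 b1 c1 d1" "a1*d1 - b1*c1 = 1" using Yset_form[OF CC h(3)] by blast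
    obtain a2 b2 c2 d2 where Y2: "y2 = mat2 a2 b2 c2 d2" "a2*d2 - b2*c2 = 1" using Yset_form[OF CC h(2)] by blast
    obtain a3 b3 c3 d3 where Y3: "y3 = mat2 a3 b3 c3 d3" "a3*d3 - b3*c3 = 1" using Yset_form[OF CC h(1)] by blast
    have "B ** phi1 y3 ** phi2 y2 = B' ** phi1 y3 ** phi2 y2"
      using eq t cancel1[OF Y1(2)] unfolding Y1(1) by metis
    then have "B ** phi1 y3 = B' ** phi1 y3"
      using cancel2[OF Y2(2)] unfolding Y2(1) by metis
    then have "B = B'"
      using cancel1[OF Y3(2)] unfolding Y3(1) by metis
    then have "u = u' \<and> d = d'" using GUD_inj[OF g(1) h(6) h(5) g'(1) h'(6) h'(5)] unfolding B_def B'_def by blast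
    then have "idx i = idx j" using ix jx t by simp
    then show False using idx_inj[OF vi vj] ne by blast
  qed
qed

end
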